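(* Let $P=\{(x,y)\in\mathbb{R}^{p+q}:Ax+Gy\le b\}$ be a nonempty rational polyhedron, let $c\in\mathbb{Q}^p$, $h\in\mathbb{Q}^q$ be such that $cx+hy$ is bounded above on $P$, and let $\gamma^*\in\mathbb{Q}$ be such that $cx+hy\le\gamma^*$ is valid for $P_I$ but not valid for $P$. With $Q$ and $\{v^r\}_{r\in R}$ as below, define for $r\in R$ $$d^r:=v^r_{1..m}A-v^r_{m+1}c,\qquad \delta^r:=\lceil v^r_{1..m}b-v^r_{m+1}\gamma^*\rceil,$$ for $r$ with $v^r_{m+1}>0$ put $\gamma^r:=\dfrac{\delta^r-v^r_{1..m}b}{-v^r_{m+1}}$, and let $\widehat\gamma:=\max\{\gamma^r:r\in R,\ v^r_{m+1}>0\}$ (this index set is nonempty). Then $cx+hy\le\widehat\gamma$ is a cutting plane for $P$, i.e. it is valid for $P_I$ and not valid for $P$.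
   Context: $A\in\mathbb{Q}^{m\times p}$, $G\in\mathbb{Q}^{m\times q}$, $b\in\mathbb{Q}^m$; $P_I=\mathrm{conv}\{(x,y)\in P:x\in\mathbb{Z}^p\}$. $Q=\{v=(v_{1..m},v_{m+1})\in\mathbb{R}^{m+1}: v_{1..m}G-v_{m+1}h=0,\ v\ge0\}$ (with $v_{1..m}$ a row vector in $\mathbb{R}^m$), and $\{v^r\}_{r\in R}$ ($R$ finite) contains exactly one representative of each extreme ray of $Q$, each scaled so that $v^r_{1..m}A-v^r_{m+1}c\in\mathbb{Z}^p$. *)

theory Defs
  imports "HOL-Analysis.Analysis"
begin

text \<open>Points of R^(p+q) are pairs (x,y) with x :: real^'p, y :: real^'q.
  Vectors in R^(m+1) are pairs (u,t) with u :: real^'m (= v_{1..m}) and t :: real (= v_{m+1}).\<close>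

definition polyP :: "real^'p^'m \<Rightarrow> real^'q^'m \<Rightarrow> real^'m \<Rightarrow> ((real^'p) \<times> (real^'q)) set" where
  "polyP A G b = {(x, y). \<forall>i. (A *v x + G *v y) $ i \<le> b $ i}"

definition integer_hull :: "((real^'p) \<times> (real^'q)) set \<Rightarrow> ((real^'p) \<times> (real^'q)) set" where
  "integer_hull S = convex hull {(x, y) \<in> S. \<forall>j. x $ j \<in> \<int>}"

definition valid_ineq :: "real^'p \<Rightarrow> real^'q \<Rightarrow> real \<Rightarrow> ((real^'p) \<times> (real^'q)) set \<Rightarrow> bool" where
  "valid_ineq c h \<gamma> S \<longleftrightarrow> (\<forall>(x, y) \<in> S. c \<bullet> x + h \<bullet> y \<le> \<gamma>)"

definition coneQ :: "real^'q^'m \<Rightarrow> real^'q \<Rightarrow> ((real^'m) \<times> real) set" where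
  "coneQ G h = {(u, t). u v* G - t *\<^sub>R h = 0 \<and> (\<forall>i. 0 \<le> u $ i) \<and> 0 \<le> t}"

definition ray :: "'a::real_vector \<Rightarrow> 'a set" where
  "ray w = {s *\<^sub>R w | s. 0 \<le> s}"

definition extreme_ray :: "'a::real_vector set \<Rightarrow> 'a set \<Rightarrow> bool" where
  "extreme_ray C S \<longleftrightarrow> (\<exists>w. w \<noteq> 0 \<and> S = ray w \<and> S face_of C)"

end

theory Submission imports Defs begin

lemma farkas_aux:
  fixes a :: "'i \<Rightarrow> 'a::euclidean_space" and \<beta> :: "'i \<Rightarrow> real"
  assumes fin: "finite I" and nosol: "\<not>(\<exists>y. \<forall>i\<in>I. a i \<bullet> y \<le> \<beta> i)"
  shows "\<exists>l. (\<forall>i\<in>I. 0 \<le> l i) \<and> (\<Sum>i\<in>I. l i *\<^sub>R a i) = 0 \<and> (\<Sum>i\<in>I. l i * \<beta> i) < 0"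
proof -
  define g where "g i = (a i, \<beta> i)" for i
  define W where "W = insert (0::'a, 1::real) (g ` I)"
  define E where "E = {(\<Sum>i\<in>I. l i *\<^sub>R g i) + \<mu> *\<^sub>R (0::'a,1::real) | l \<mu>. (\<forall>i\<in>I. 0 \<le> l i) \<and> 0 \<le> \<mu>}"
  have cE: "convex_cone E"
    unfolding convex_cone_def
  proof (intro conjI)
    have "(\<Sum>i\<in>I. 0 *\<^sub>R g i) + 0 *\<^sub>R (0,1) \<in> E" unfolding E_def by (intro CollectI exI[of _ "\<lambda>_. 0"] exI[of _ "0::real"]) (simp add: zero_prod_def)
    then show "E \<noteq> {}" by blast
    show "convex E" unfolding convex_def
    proof (intro ballI allI impI)
      fix x y and u v :: real
      assume "x \<in> E" "y \<in> E" and uv: "0 \<le> u" "0 \<le> v" "u + v = 1"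
      then obtain l \<mu> l' \<mu>' where x: "x = (\<Sum>i\<in>I. l i *\<^sub>R g i) + \<mu> *\<^sub>R (0,1)" "\<forall>i\<in>I. 0 \<le> l i" "0 \<le> \<mu>"
        and y: "y = (\<Sum>i\<in>I. l' i *\<^sub>R g i) + \<mu>' *\<^sub>R (0,1)" "\<forall>i\<in>I. 0 \<le> l' i" "0 \<le> \<mu>'"
        unfolding E_def by blast
      have "u *\<^sub>R x + v *\<^sub>R y = (\<Sum>i\<in>I. (u * l i + v * l' i) *\<^sub>R g i) + (u * \<mu> + v * \<mu>') *\<^sub>R (0,1)"
        by (simp add: x y scaleR_add_right scaleR_sum_right sum.distrib scaleR_add_left)
      moreover have "\<forall>i\<in>I. 0 \<le> u * l i + v * l' i" using x y uv by simp
      moreover have "0 \<le> u * \<mu> + v * \<mu>'" using x y uv by simp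
      ultimately show "u *\<^sub>R x + v *\<^sub>R y \<in> E" unfolding E_def
        by (intro CollectI exI[of _ "\<lambda>i. u * l i + v * l' i"] exI[of _ "u * \<mu> + v * \<mu>'"]) simp
    qed
    show "conic E" unfolding conic_def
    proof (intro allI impI)
      fix x and c :: real
      assume "x \<in> E" "0 \<le> c"
      then obtain l \<mu> where x: "x = (\<Sum>i\<in>I. l i *\<^sub>R g i) + \<mu> *\<^sub>R (0,1)" "\<forall>i\<in>I. 0 \<le> l i" "0 \<le> \<mu>" and c: "0 \<le> c"
        unfolding E_def by blast
      have "c *\<^sub>R x = (\<Sum>i\<in>I. (c * l i) *\<^sub>R g i) + (c * \<mu>) *\<^sub>R (0,1)"
        by (simp add: x scaleR_add_right scaleR_sum_right)
      then show "c *\<^sub>R x \<in> E" unfolding E_def using x c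
        by (intro CollectI exI[of _ "\<lambda>i. c * l i"] exI[of _ "c * \<mu>"]) simp
    qed
  qed
  have WE: "W \<subseteq> E"
  proof
    fix w assume "w \<in> W"
    then consider "w = (0,1)" | j where "j \<in> I" "w = g j" unfolding W_def by blast
    then show "w \<in> E"
    proof cases
      case 1
      show ?thesis unfolding E_def using 1 by (intro CollectI exI[of _ "\<lambda>_. 0"] exI[of _ "1::real"]) simp
    next
      case 2
      have "(\<Sum>i\<in>I. (if i = j then 1 else 0) *\<^sub>R g i) = g j"
        using 2 fin by (simp add: if_distrib[of "\<lambda>c. c *\<^sub>R _"] sum.delta cong: if_cong)
      then show ?thesis unfolding E_def using 2 by (intro CollectI exI[of _ "\<lambda>i. if i = j then 1 else 0"] exI[of _ "0::real"]) (simp add: zero_prod_def)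
    qed
  qed
  have hullE: "convex_cone hull W \<subseteq> E"
    using WE cE by (rule hull_minimal)
  have closedK: "closed (convex_cone hull W)"
    by (simp add: closed_convex_cone_hull W_def fin)
  show ?thesis
  proof (rule ccontr)
    assume neg: "\<not> ?thesis"
    have notin: "(0,-1) \<notin> convex_cone hull W"
    proof
      assume "(0,-1) \<in> convex_cone hull W"
      with hullE obtain l \<mu> where l: "(0,-1) = (\<Sum>i\<in>I. l i *\<^sub>R g i) + \<mu> *\<^sub>R (0::'a,1::real)" "\<forall>i\<in>I. 0 \<le> l i" "0 \<le> \<mu>"
        unfolding E_def by blast
      have "fst ((0::'a,-1::real)) = fst ((\<Sum>i\<in>I. l i *\<^sub>R g i) + \<mu> *\<^sub>R (0::'a,1::real))" using l(1) by simp
      then have 1: "(\<Sum>i\<in>I. l i *\<^sub>R a i) = 0" by (simp add: fst_sum g_def)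
      have "snd ((0::'a,-1::real)) = snd ((\<Sum>i\<in>I. l i *\<^sub>R g i) + \<mu> *\<^sub>R (0::'a,1::real))" using l(1) by simp
      then have "(\<Sum>i\<in>I. l i * \<beta> i) = -1 - \<mu>" by (simp add: snd_sum g_def)
      then have "(\<Sum>i\<in>I. l i * \<beta> i) < 0" using l(3) by simp
      with 1 l(2) neg show False by blast
    qed
    obtain w b0 where wb: "inner w (0::'a,-1::real) < b0" and wK: "\<forall>x\<in>convex_cone hull W. b0 < inner w x"
      using separating_hyperplane_closed_point[OF convex_convex_cone_hull closedK notin] by blast
    obtain w1 s where w: "w = (w1, s)" by (cases w)
    have "b0 < inner w 0" using wK convex_cone_hull_contains_0 by blast
    then have b0: "b0 < 0" by simp
    have gen: "0 \<le> inner w k" if "k \<in> W" for k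
    proof (rule ccontr)
      assume "\<not> 0 \<le> inner w k"
      then have neg: "inner w k < 0" by simp
      define cc where "cc = b0 / inner w k"
      have "0 \<le> cc" using neg b0 unfolding cc_def by (simp add: divide_nonpos_neg)
      then have "cc *\<^sub>R k \<in> convex_cone hull W"
        using conicD[OF conic_convex_cone_hull hull_inc[OF that]] by blast
      then have "b0 < inner w (cc *\<^sub>R k)" using wK by blast
      also have "inner w (cc *\<^sub>R k) = b0" using neg unfolding cc_def by simp
      finally show False by simp
    qed
    have s0: "0 \<le> s" using gen[of "(0,1)"] w unfolding W_def by auto
    have sp: "0 < s" using wb b0 w by simp
    define y where "y = (- (1/s)) *\<^sub>R w1"
    have "\<forall>i\<in>I. a i \<bullet> y \<le> \<beta> i"
    proof
      fix i assume "i \<in> I"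
      then have "0 \<le> inner w (g i)" using gen unfolding W_def by blast
      then have "0 \<le> w1 \<bullet> a i + s * \<beta> i" using w unfolding g_def by simp
      then have "- (w1 \<bullet> a i) / s \<le> \<beta> i" using sp by (simp add: field_simps)
      then show "a i \<bullet> y \<le> \<beta> i" unfolding y_def by (simp add: inner_commute)
    qed
    with nosol show False by blast
  qed
qed


lemma ray_conv: "convex (ray e)"
  unfolding ray_def
proof (rule convexI)
  fix x y and u v :: real
  assume "x \<in> {s *\<^sub>R e |s. 0 \<le> s}" "y \<in> {s *\<^sub>R e |s. 0 \<le> s}" "0 \<le> u" "0 \<le> v" "u + v = 1"
  then obtain s1 s2 where "x = s1 *\<^sub>R e" "y = s2 *\<^sub>R e" "0 \<le> s1" "0 \<le> s2" "0 \<le> u" "0 \<le> v" by auto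
  then have "u *\<^sub>R x + v *\<^sub>R y = (u * s1 + v * s2) *\<^sub>R e" "0 \<le> u * s1 + v * s2"
    by (auto simp: scaleR_add_left)
  then show "u *\<^sub>R x + v *\<^sub>R y \<in> {s *\<^sub>R e |s. 0 \<le> s}" by blast
qed

lemma ray_mem: "0 \<le> s \<Longrightarrow> s *\<^sub>R e \<in> ray e"
  unfolding ray_def by blast

lemma cone_extreme_ray_neg:
  fixes C :: "'a::euclidean_space set"
  assumes conC: "conic C" and cvxC: "convex C" and clC: "closed C"
    and nrm: "\<forall>z\<in>C. norm z \<le> inner e0 z"
    and qC: "q \<in> C" and wq: "inner w q < 0"
  shows "\<exists>e. extreme_ray C (ray e) \<and> inner w e < 0"
proof -
  define S where "S = C \<inter> {z. inner e0 z = 1}"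
  have sig0: "0 \<le> inner e0 z" if "z \<in> C" for z using nrm that norm_ge_zero order_trans by blast
  have sigz: "z = 0" if "z \<in> C" "inner e0 z = 0" for z using nrm that by fastforce
  have cS: "compact S"
  proof (subst compact_eq_bounded_closed, rule conjI)
    show "bounded S" unfolding bounded_iff S_def using nrm by (intro exI[of _ 1]) auto
    show "closed S" unfolding S_def by (intro closed_Int clC closed_hyperplane)
  qed
  have vS: "convex S" unfolding S_def by (intro convex_Int cvxC convex_hyperplane)
  have q0: "q \<noteq> 0" using wq by auto
  have sq: "0 < inner e0 q" using sig0[OF qC] sigz[OF qC] q0 by force
  define q' where "q' = (1 / inner e0 q) *\<^sub>R q"
  have q'S: "q' \<in> S" unfolding S_def q'_def using conicD[OF conC qC, of "1 / inner e0 q"] sq by auto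
  have wq': "inner w q' < 0" unfolding q'_def using sq wq by (simp add: divide_neg_pos)
  obtain e where eS: "e extreme_point_of S" and we: "inner w e < 0"
  proof (rule ccontr)
    assume "\<not> thesis"
    with that have ge: "\<forall>e. e extreme_point_of S \<longrightarrow> 0 \<le> inner w e" by force
    have "convex hull {x. x extreme_point_of S} \<subseteq> {z. 0 \<le> inner w z}"
      using ge by (intro hull_minimal) (auto simp: convex_halfspace_ge)
    then have "S \<subseteq> {z. 0 \<le> inner w z}"
      using Krein_Milman_Minkowski[OF cS vS] by simp
    with q'S wq' show False by auto
  qed
  have eS': "e \<in> C" "inner e0 e = 1" using eS unfolding extreme_point_of_def S_def by auto
  have sub: "ray e \<subseteq> C" unfolding ray_def using conicD[OF conC eS'(1)] by blast
  have main: "\<forall>a\<in>C. \<forall>b\<in>C. \<forall>x\<in>ray e. x \<in> open_segment a b \<longrightarrow> a \<in> ray e \<and> b \<in> ray e"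
  proof (intro ballI impI)
    fix a b x assume aC: "a \<in> C" and bC: "b \<in> C" and xr: "x \<in> ray e" and seg: "x \<in> open_segment a b"
    obtain s where s: "0 \<le> s" "x = s *\<^sub>R e" using xr unfolding ray_def by blast
    obtain l where l: "0 < l" "l < 1" "x = (1 - l) *\<^sub>R a + l *\<^sub>R b" and ab: "a \<noteq> b"
      using seg unfolding in_segment(2) by blast
    have sx: "inner e0 x = s" using s eS'(2) by simp
    have sx2: "inner e0 x = (1 - l) * inner e0 a + l * inner e0 b" using l(3) by (simp add: inner_add_right)
    have sa: "0 \<le> inner e0 a" and sb: "0 \<le> inner e0 b" using sig0 aC bC by auto
    show "a \<in> ray e \<and> b \<in> ray e"
    proof (cases "inner e0 a = 0")
      case True
      then have a0: "a = 0" using sigz aC by blast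
      then have lb: "l *\<^sub>R b = s *\<^sub>R e" using l s by simp
      have "b = (1/l) *\<^sub>R (l *\<^sub>R b)" using l by simp
      also have "\<dots> = (s / l) *\<^sub>R e" unfolding lb by simp
      finally have "b = (s / l) *\<^sub>R e" .
      then show ?thesis using a0 ray_mem[of 0 e] ray_mem[of "s / l" e] s l by simp
    next
      case Fa: False
      show ?thesis
      proof (cases "inner e0 b = 0")
        case True
        then have b0: "b = 0" using sigz bC by blast
        then have lb: "(1 - l) *\<^sub>R a = s *\<^sub>R e" using l s by simp
        have "a = (1/(1-l)) *\<^sub>R ((1 - l) *\<^sub>R a)" using l by simp
        also have "\<dots> = (s / (1 - l)) *\<^sub>R e" unfolding lb by simp
        finally have "a = (s / (1 - l)) *\<^sub>R e" .
        then show ?thesis using b0 ray_mem[of 0 e] ray_mem[of "s / (1 - l)" e] s l by simp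
      next
        case Fb: False
        define \<alpha> where "\<alpha> = inner e0 a"
        define \<beta> where "\<beta> = inner e0 b"
        have ap: "0 < \<alpha>" and bp: "0 < \<beta>" using Fa Fb sa sb unfolding \<alpha>_def \<beta>_def by auto
        define a' where "a' = (1/\<alpha>) *\<^sub>R a"
        define b' where "b' = (1/\<beta>) *\<^sub>R b"
        have a'S: "a' \<in> S" unfolding S_def a'_def \<alpha>_def using conicD[OF conC aC, of "1/inner e0 a"] ap \<alpha>_def by auto
        have b'S: "b' \<in> S" unfolding S_def b'_def \<beta>_def using conicD[OF conC bC, of "1/inner e0 b"] bp \<beta>_def by auto
        have spos: "s = (1 - l) * \<alpha> + l * \<beta>" using sx sx2 unfolding \<alpha>_def \<beta>_def by simp
        then have sp: "0 < s" using ap bp l by (smt (verit) mult_pos_pos)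
        define \<mu> where "\<mu> = l * \<beta> / s"
        have "0 < (1-l)*\<alpha>" using ap l by simp
        then have lbs: "l*\<beta> < s" using spos by linarith
        have mu: "0 < \<mu>" "\<mu> < 1" unfolding \<mu>_def using sp l bp lbs
          by (auto simp: field_simps)
        have "e = (1/s) *\<^sub>R x" using sp s by simp
        also have "\<dots> = ((1-l)/s) *\<^sub>R a + (l/s) *\<^sub>R b"
          unfolding l(3) by (simp add: scaleR_add_right)
        also have "\<dots> = (1 - \<mu>) *\<^sub>R a' + \<mu> *\<^sub>R b'"
        proof -
          have "1 - \<mu> = (1-l)*\<alpha>/s" unfolding \<mu>_def using sp spos by (simp add: field_simps)
          then have c1: "(1-\<mu>) * (1/\<alpha>) = (1-l)/s" using ap by simp
          have c2: "\<mu> * (1/\<beta>) = l/s" unfolding \<mu>_def using sp bp by (simp add: field_simps)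
          show ?thesis unfolding a'_def b'_def scaleR_scaleR c1 c2 ..
        qed
        finally have ee: "e = (1 - \<mu>) *\<^sub>R a' + \<mu> *\<^sub>R b'" .
        have "a' = b'"
        proof (rule ccontr)
          assume "a' \<noteq> b'"
          then have "e \<in> open_segment a' b'" unfolding in_segment(2) using ee mu by blast
          then show False using eS a'S b'S unfolding extreme_point_of_def by blast
        qed
        then have "e = a'" using ee by (simp add: scaleR_add_left[symmetric])
        moreover have "a = \<alpha> *\<^sub>R a'" unfolding a'_def using ap by simp
        moreover have "b = \<beta> *\<^sub>R b'" unfolding b'_def using bp by simp
        ultimately have "a = \<alpha> *\<^sub>R e" "b = \<beta> *\<^sub>R e" using \<open>a' = b'\<close> by auto
        then show ?thesis using ray_mem[of \<alpha> e] ray_mem[of \<beta> e] ap bp by simp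
      qed
    qed
  qed
  have "ray e face_of C" unfolding face_of_def using sub ray_conv main by blast
  moreover have "e \<noteq> 0" using eS'(2) by auto
  ultimately have "extreme_ray C (ray e)" unfolding extreme_ray_def by blast
  with we show ?thesis by blast
qed


lemma coneQ_iff:
  fixes G :: "real^'q^'m" and h :: "real^'q"
  shows "(u, t) \<in> coneQ G h \<longleftrightarrow> (\<forall>j. (\<Sum>i\<in>UNIV. u$i * G$i$j) = t * h$j) \<and> (\<forall>i. 0 \<le> u$i) \<and> 0 \<le> t"
  unfolding coneQ_def by (auto simp: vec_eq_iff vector_matrix_mult_def mult.commute)

lemma coneQ_conic: "conic (coneQ G h)"
  unfolding conic_def
proof (intro allI impI)
  fix z and c :: real assume z: "z \<in> coneQ G h" and c: "0 \<le> c"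
  obtain u t where zz: "z = (u,t)" by (cases z)
  show "c *\<^sub>R z \<in> coneQ G h" using z c unfolding zz
    by (auto simp: coneQ_iff sum_distrib_left[symmetric] mult.assoc)
qed

lemma coneQ_convex: "convex (coneQ G h)"
proof (rule convexI)
  fix x y and a b :: real assume x: "x \<in> coneQ G h" and y: "y \<in> coneQ G h" and ab: "0 \<le> a" "0 \<le> b" "a + b = 1"
  obtain u t where xx: "x = (u,t)" by (cases x)
  obtain u' t' where yy: "y = (u',t')" by (cases y)
  show "a *\<^sub>R x + b *\<^sub>R y \<in> coneQ G h" using x y ab unfolding xx yy
    by (auto simp: coneQ_iff sum.distrib distrib_right sum_distrib_left[symmetric] mult.assoc distrib_left)
qed

lemma coneQ_closed:
  fixes G :: "real^'q^'m" and h :: "real^'q"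
  shows "closed (coneQ G h)"
proof -
  have eq: "coneQ G h = (\<Inter>j. {z. inner ((\<chi> i. G$i$j), - h$j) z = 0}) \<inter> (\<Inter>i. {z. inner (axis i 1, 0::real) z \<ge> 0})
     \<inter> {z. inner (0::real^'m, 1::real) z \<ge> 0}"
  proof (intro set_eqI iffI)
    fix z :: "(real^'m) \<times> real"
    obtain u t where zz: "z = (u,t)" by (cases z)
    { assume "z \<in> coneQ G h"
      then show "z \<in> (\<Inter>j. {z. inner ((\<chi> i. G$i$j), - h$j) z = 0}) \<inter> (\<Inter>i. {z. inner (axis i 1, 0::real) z \<ge> 0})
     \<inter> {z. inner (0::real^'m, 1::real) z \<ge> 0}"
        unfolding zz coneQ_iff by (simp only: mem_Collect_eq INT_iff Int_iff inner_Pair inner_axis') (auto simp: inner_vec_def mult.commute) }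
    { assume "z \<in> (\<Inter>j. {z. inner ((\<chi> i. G$i$j), - h$j) z = 0}) \<inter> (\<Inter>i. {z. inner (axis i 1, 0::real) z \<ge> 0})
     \<inter> {z. inner (0::real^'m, 1::real) z \<ge> 0}"
      then show "z \<in> coneQ G h"
        unfolding zz coneQ_iff by (simp only: mem_Collect_eq INT_iff Int_iff inner_Pair inner_axis') (auto simp: inner_vec_def mult.commute) }
  qed
  show ?thesis unfolding eq
    by (intro closed_Int closed_INT ballI closed_hyperplane closed_halfspace_ge)
qed

lemma coneQ_norm:
  fixes G :: "real^'q^'m" and h :: "real^'q"
  shows "\<forall>z\<in>coneQ G h. norm z \<le> inner ((\<chi> i. 1)::real^'m, 1::real) z"
proof
  fix z assume z: "z \<in> coneQ G h"
  obtain u t where zz: "z = (u,t)" by (cases z)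
  have u0: "\<forall>i. 0 \<le> u$i" and t0: "0 \<le> t" using z unfolding zz coneQ_iff by auto
  have "norm z \<le> norm u + norm t" unfolding zz by (rule norm_Pair_le)
  also have "norm u \<le> (\<Sum>i\<in>UNIV. \<bar>u$i\<bar>)" by (rule norm_le_l1_cart)
  also have "(\<Sum>i\<in>UNIV. \<bar>u$i\<bar>) = (\<Sum>i\<in>UNIV. u$i)" using u0 by simp
  finally show "norm z \<le> inner ((\<chi> i. 1)::real^'m, 1::real) z"
    unfolding zz using t0 by (simp add: inner_vec_def)
qed


lemma sum_option_UNIV:
  fixes f :: "'a::finite option \<Rightarrow> 'b::comm_monoid_add"
  shows "(\<Sum>k\<in>UNIV. f k) = f None + (\<Sum>i\<in>UNIV. f (Some i))"
proof -
  have "(\<Sum>k\<in>UNIV. f k) = (\<Sum>k\<in>insert None (range Some). f k)" by (simp add: UNIV_option_conv[symmetric])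
  also have "\<dots> = f None + (\<Sum>k\<in>range Some. f k)" by (subst sum.insert) auto
  also have "(\<Sum>k\<in>range Some. f k) = (\<Sum>i\<in>UNIV. f (Some i))" by (subst sum.reindex) (auto simp: inj_on_def)
  finally show ?thesis .
qed

lemma dual_ineq:
  fixes A :: "real^'p^'m" and G :: "real^'q^'m" and b :: "real^'m" and c :: "real^'p" and h :: "real^'q"
  assumes P: "(x,y) \<in> polyP A G b" and Q: "(u,t) \<in> coneQ G h"
  shows "(u v* A - t *\<^sub>R c) \<bullet> x \<le> u \<bullet> b - t * (c \<bullet> x + h \<bullet> y)"
proof -
  have le: "\<forall>i. (A *v x + G *v y)$i \<le> b$i" using P unfolding polyP_def by auto
  have u0: "\<forall>i. 0 \<le> u$i" and uG: "u v* G = t *\<^sub>R h" using Q unfolding coneQ_def by auto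
  have "u \<bullet> (A *v x + G *v y) \<le> u \<bullet> b" unfolding inner_vec_def inner_real_def
    by (rule sum_mono, rule mult_left_mono) (use le u0 in blast)+
  moreover have "u \<bullet> (A *v x) = (u v* A) \<bullet> x" by (simp add: dot_lmul_matrix)
  moreover have "u \<bullet> (G *v y) = t * (h \<bullet> y)" using uG dot_lmul_matrix[of u G y, symmetric] by simp
  ultimately have "(u v* A) \<bullet> x + t * (h \<bullet> y) \<le> u \<bullet> b" by (simp add: inner_add_right)
  moreover have "(u v* A - t *\<^sub>R c) \<bullet> x = (u v* A) \<bullet> x - t * (c \<bullet> x)" by (simp add: inner_diff_left)
  ultimately show ?thesis by (simp add: algebra_simps)
qed

lemma vr_in_Q:
  assumes "extreme_ray C (ray z)"
  shows "z \<in> C"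
proof -
  obtain w where "ray z face_of C" using assms unfolding extreme_ray_def by blast
  then have "ray z \<subseteq> C" by (rule face_of_imp_subset)
  moreover have "z \<in> ray z" using ray_mem[of 1 z] by simp
  ultimately show ?thesis by blast
qed

lemma KL:
  fixes A :: "real^'p^'m" and G :: "real^'q^'m" and b :: "real^'m" and c :: "real^'p" and h :: "real^'q"
    and R :: "'r set" and v :: "'r \<Rightarrow> (real^'m) \<times> real"
  assumes all_rays: "\<forall>S. extreme_ray (coneQ G h) S \<longrightarrow> (\<exists>r \<in> R. S = ray (v r))"
    and hyp: "\<forall>r\<in>R. (fst (v r) v* A - snd (v r) *\<^sub>R c) \<bullet> x0 \<le> fst (v r) \<bullet> b - snd (v r) * \<gamma>"
  shows "\<exists>y. (x0,y) \<in> polyP A G b \<and> \<gamma> \<le> c \<bullet> x0 + h \<bullet> y"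
proof (rule ccontr)
  assume nex: "\<not> ?thesis"
  define a :: "'m option \<Rightarrow> real^'q" where "a k = (case k of Some i \<Rightarrow> G$i | None \<Rightarrow> -h)" for k
  define \<beta> :: "'m option \<Rightarrow> real" where "\<beta> k = (case k of Some i \<Rightarrow> b$i - (A *v x0)$i | None \<Rightarrow> c \<bullet> x0 - \<gamma>)" for k
  have nosol: "\<not>(\<exists>y. \<forall>k\<in>UNIV. a k \<bullet> y \<le> \<beta> k)"
  proof
    assume "\<exists>y. \<forall>k\<in>UNIV. a k \<bullet> y \<le> \<beta> k"
    then obtain y where y: "\<forall>k. a k \<bullet> y \<le> \<beta> k" by blast
    have "(x0,y) \<in> polyP A G b" unfolding polyP_def
    proof (simp, intro allI)
      fix i
      have "a (Some i) \<bullet> y \<le> \<beta> (Some i)" using y by blast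
      then show "(A *v x0)$i + (G *v y)$i \<le> b$i" unfolding a_def \<beta>_def by (simp add: matrix_vector_mul_component)
    qed
    moreover have "\<gamma> \<le> c \<bullet> x0 + h \<bullet> y" using y[rule_format, of None] unfolding a_def \<beta>_def by simp
    ultimately show False using nex by blast
  qed
  obtain l where l0: "\<forall>k\<in>UNIV. 0 \<le> l k" and lsum: "(\<Sum>k\<in>UNIV. l k *\<^sub>R a k) = 0"
    and lneg: "(\<Sum>k\<in>UNIV. l k * \<beta> k) < 0"
    using farkas_aux[OF finite_class.finite_UNIV nosol] by blast
  define u where "u = (\<chi> i. l (Some i))"
  define t where "t = l None"
  have "(\<Sum>i\<in>UNIV. u$i *\<^sub>R G$i) - t *\<^sub>R h = 0"
    using lsum unfolding sum_option_UNIV u_def t_def a_def by simp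
  moreover have "(\<Sum>i\<in>UNIV. u$i *\<^sub>R G$i) = u v* G"
    by (simp add: vec_eq_iff vector_matrix_mult_def mult.commute)
  ultimately have uG: "u v* G - t *\<^sub>R h = 0" by simp
  have qQ: "(u,t) \<in> coneQ G h" unfolding coneQ_def using uG l0 unfolding u_def t_def by auto
  define w where "w = (b - A *v x0, c \<bullet> x0 - \<gamma>)"
  have "inner w (u,t) = (\<Sum>k\<in>UNIV. l k * \<beta> k)"
    unfolding w_def sum_option_UNIV u_def t_def \<beta>_def by (simp add: inner_vec_def mult.commute)
  then have wq: "inner w (u,t) < 0" using lneg by simp
  obtain e where er: "extreme_ray (coneQ G h) (ray e)" and we: "inner w e < 0"
    using cone_extreme_ray_neg[OF coneQ_conic coneQ_convex coneQ_closed coneQ_norm qQ wq] by blast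
  obtain r where rR: "r \<in> R" and rr: "ray e = ray (v r)" using all_rays er by blast
  have "e \<in> ray (v r)" using ray_mem[of 1 e] rr by simp
  then obtain s where s: "0 \<le> s" "e = s *\<^sub>R v r" unfolding ray_def by blast
  have wv: "inner w (v r) < 0"
  proof (rule ccontr)
    assume "\<not> inner w (v r) < 0"
    then have "0 \<le> s * inner w (v r)" using s by simp
    then show False using we s by simp
  qed
  obtain ur tr where vr: "v r = (ur, tr)" by (cases "v r")
  have "(ur v* A - tr *\<^sub>R c) \<bullet> x0 \<le> ur \<bullet> b - tr * \<gamma>" using hyp[rule_format, OF rR] unfolding vr by simp
  moreover have "(ur v* A) \<bullet> x0 = ur \<bullet> (A *v x0)" by (simp add: dot_lmul_matrix)
  moreover have "inner w (v r) = ur \<bullet> b - ur \<bullet> (A *v x0) + tr * (c \<bullet> x0) - tr * \<gamma>"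
  proof -
    have "(b - A *v x0) \<bullet> ur = ur \<bullet> b - ur \<bullet> (A *v x0)" by (simp add: inner_commute[of _ ur] inner_diff_right)
    then show ?thesis unfolding w_def vr by (simp add: algebra_simps)
  qed
  moreover have "(ur v* A - tr *\<^sub>R c) \<bullet> x0 = (ur v* A) \<bullet> x0 - tr * (c \<bullet> x0)" by (simp add: inner_diff_left)
  ultimately show False using wv vr by simp
qed


theorem theorem3p1:
  fixes A :: "real^'p^'m" and G :: "real^'q^'m" and b :: "real^'m"
    and c :: "real^'p" and h :: "real^'q" and \<gamma>star :: real
    and R :: "'r set" and v :: "'r \<Rightarrow> (real^'m) \<times> real"
  assumes rat_A: "\<forall>i j. A $ i $ j \<in> \<rat>" and rat_G: "\<forall>i j. G $ i $ j \<in> \<rat>"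
    and rat_b: "\<forall>i. b $ i \<in> \<rat>" and rat_c: "\<forall>j. c $ j \<in> \<rat>" and rat_h: "\<forall>j. h $ j \<in> \<rat>"
    and nonempty: "polyP A G b \<noteq> {}"
    and bounded: "\<exists>M. \<forall>(x, y) \<in> polyP A G b. c \<bullet> x + h \<bullet> y \<le> M"
    and rat_gamma: "\<gamma>star \<in> \<rat>"
    and valid_PI: "valid_ineq c h \<gamma>star (integer_hull (polyP A G b))"
    and not_valid_P: "\<not> valid_ineq c h \<gamma>star (polyP A G b)"
    and finR: "finite R"
    and rays: "\<forall>r \<in> R. extreme_ray (coneQ G h) (ray (v r))"
    and distinct_rays: "inj_on (\<lambda>r. ray (v r)) R"
    and all_rays: "\<forall>S. extreme_ray (coneQ G h) S \<longrightarrow> (\<exists>r \<in> R. S = ray (v r))"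
    and scaled: "\<forall>r \<in> R. \<forall>j. (fst (v r) v* A - snd (v r) *\<^sub>R c) $ j \<in> \<int>"
  shows "let \<delta> = (\<lambda>r. real_of_int \<lceil>fst (v r) \<bullet> b - snd (v r) * \<gamma>star\<rceil>);
             \<gamma> = (\<lambda>r. (\<delta> r - fst (v r) \<bullet> b) / (- snd (v r)));
             Rpos = {r \<in> R. 0 < snd (v r)};
             \<gamma>hat = Max (\<gamma> ` Rpos)
         in Rpos \<noteq> {} \<and> valid_ineq c h \<gamma>hat (integer_hull (polyP A G b))
            \<and> \<not> valid_ineq c h \<gamma>hat (polyP A G b)"
proof -
  define \<delta> where "\<delta> = (\<lambda>r. real_of_int \<lceil>fst (v r) \<bullet> b - snd (v r) * \<gamma>star\<rceil>)"
  define \<gamma> where "\<gamma> = (\<lambda>r. (\<delta> r - fst (v r) \<bullet> b) / (- snd (v r)))"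
  define Rpos where "Rpos = {r \<in> R. 0 < snd (v r)}"
  define \<gamma>hat where "\<gamma>hat = Max (\<gamma> ` Rpos)"
  define P where "P = polyP A G b"
  have vQ: "v r \<in> coneQ G h" if "r \<in> R" for r using vr_in_Q rays that by blast
  have t0: "0 \<le> snd (v r)" if "r \<in> R" for r using vQ[OF that] unfolding coneQ_def by auto
  have dual: "(fst (v r) v* A - snd (v r) *\<^sub>R c) \<bullet> x \<le> fst (v r) \<bullet> b - snd (v r) * (c \<bullet> x + h \<bullet> y)"
    if "r \<in> R" "(x,y) \<in> P" for r x y
    using dual_ineq[of x y A G b "fst (v r)" "snd (v r)" h c] vQ[OF that(1)] that(2) unfolding P_def by simp
  have finRpos: "finite Rpos" unfolding Rpos_def using finR by simp
  have Rne: "Rpos \<noteq> {}"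
  proof
    assume Re: "Rpos = {}"
    then have tz: "snd (v r) = 0" if "r \<in> R" for r using t0[OF that] that unfolding Rpos_def by force
    obtain x0 y0 where xy0: "(x0,y0) \<in> P" using nonempty unfolding P_def by auto
    obtain M where M: "\<forall>(x, y) \<in> P. c \<bullet> x + h \<bullet> y \<le> M" using bounded unfolding P_def by blast
    have "\<forall>r\<in>R. (fst (v r) v* A - snd (v r) *\<^sub>R c) \<bullet> x0 \<le> fst (v r) \<bullet> b - snd (v r) * (M + 1)"
      using dual[OF _ xy0] tz by simp
    then obtain y where "(x0,y) \<in> P" "M + 1 \<le> c \<bullet> x0 + h \<bullet> y"
      using KL[OF all_rays] unfolding P_def by blast
    then show False using M by auto
  qed
  have gam: "\<gamma> r = (fst (v r) \<bullet> b - \<delta> r) / snd (v r)" if "r \<in> Rpos" for r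
    unfolding \<gamma>_def by (simp add: divide_minus_right) (simp add: diff_divide_distrib)
  have gle: "\<gamma> r \<le> \<gamma>star" if "r \<in> Rpos" for r
  proof -
    have tp: "0 < snd (v r)" using that unfolding Rpos_def by auto
    have "fst (v r) \<bullet> b - snd (v r) * \<gamma>star \<le> \<delta> r" unfolding \<delta>_def by (rule le_of_int_ceiling)
    then show ?thesis unfolding gam[OF that] using tp by (simp add: divide_le_eq algebra_simps)
  qed
  have hat_le: "\<gamma>hat \<le> \<gamma>star"
  proof -
    have "\<gamma>hat \<in> \<gamma> ` Rpos" unfolding \<gamma>hat_def using finRpos Rne by (intro Max_in) auto
    then show ?thesis using gle by auto
  qed
  have notP: "\<not> valid_ineq c h \<gamma>hat P"
  proof
    assume "valid_ineq c h \<gamma>hat P"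
    then have "valid_ineq c h \<gamma>star P" using hat_le unfolding valid_ineq_def by fastforce
    then show False using not_valid_P unfolding P_def by simp
  qed
  define MI where "MI = {(x, y) \<in> P. \<forall>j. x $ j \<in> \<int>}"
  have validMI: "c \<bullet> x + h \<bullet> y \<le> \<gamma>star" if "(x,y) \<in> MI" for x y
  proof -
    have "(x,y) \<in> integer_hull P" unfolding integer_hull_def MI_def[symmetric] using that by (rule hull_inc)
    then show ?thesis using valid_PI unfolding valid_ineq_def P_def by fastforce
  qed
  have main: "c \<bullet> x + h \<bullet> y \<le> \<gamma>hat" if xyMI: "(x,y) \<in> MI" for x y
  proof (rule ccontr)
    assume "\<not> ?thesis"
    then have gt: "\<gamma>hat < c \<bullet> x + h \<bullet> y" by simp
    have xyP: "(x,y) \<in> P" and xint: "\<forall>j. x $ j \<in> \<int>" using xyMI unfolding MI_def by auto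
    define d where "d r = fst (v r) v* A - snd (v r) *\<^sub>R c" for r
    have strict: "d r \<bullet> x < fst (v r) \<bullet> b - snd (v r) * \<gamma>star" if rP: "r \<in> Rpos" for r
    proof -
      have rR: "r \<in> R" and tp: "0 < snd (v r)" using rP unfolding Rpos_def by auto
      have "\<gamma> r \<le> \<gamma>hat" unfolding \<gamma>hat_def using finRpos rP by simp
      then have "(fst (v r) \<bullet> b - \<delta> r) / snd (v r) < c \<bullet> x + h \<bullet> y" using gt gam[OF rP] by simp
      then have "fst (v r) \<bullet> b - \<delta> r < snd (v r) * (c \<bullet> x + h \<bullet> y)" using tp by (simp add: divide_less_eq mult.commute)
      moreover have "d r \<bullet> x \<le> fst (v r) \<bullet> b - snd (v r) * (c \<bullet> x + h \<bullet> y)" unfolding d_def using dual[OF rR xyP] .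
      ultimately have lt: "d r \<bullet> x < \<delta> r" by simp
      have "d r \<bullet> x \<in> \<int>" unfolding inner_vec_def d_def
        using scaled rR xint by (intro Ints_sum Ints_mult) (auto simp: inner_real_def)
      then obtain k where k: "d r \<bullet> x = of_int k" by (auto elim: Ints_cases)
      then have "k < \<lceil>fst (v r) \<bullet> b - snd (v r) * \<gamma>star\<rceil>" using lt unfolding \<delta>_def by simp
      then have "of_int k < fst (v r) \<bullet> b - snd (v r) * \<gamma>star" by (simp add: less_ceiling_iff)
      then show ?thesis using k by simp
    qed
    define \<gamma>2 where "\<gamma>2 = Min ((\<lambda>r. (fst (v r) \<bullet> b - d r \<bullet> x) / snd (v r)) ` Rpos)"
    have g2: "\<gamma>star < \<gamma>2" unfolding \<gamma>2_def
    proof (subst Min_gr_iff)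
      show "finite ((\<lambda>r. (fst (v r) \<bullet> b - d r \<bullet> x) / snd (v r)) ` Rpos)" using finRpos by simp
      show "(\<lambda>r. (fst (v r) \<bullet> b - d r \<bullet> x) / snd (v r)) ` Rpos \<noteq> {}" using Rne by simp
      show "\<forall>a\<in>(\<lambda>r. (fst (v r) \<bullet> b - d r \<bullet> x) / snd (v r)) ` Rpos. \<gamma>star < a"
      proof
        fix a assume "a \<in> (\<lambda>r. (fst (v r) \<bullet> b - d r \<bullet> x) / snd (v r)) ` Rpos"
        then obtain r where rP: "r \<in> Rpos" and a: "a = (fst (v r) \<bullet> b - d r \<bullet> x) / snd (v r)" by blast
        have tp: "0 < snd (v r)" using rP unfolding Rpos_def by auto
        show "\<gamma>star < a" unfolding a using strict[OF rP] tp by (simp add: less_divide_eq algebra_simps)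
      qed
    qed
    have hypKL: "\<forall>r\<in>R. (fst (v r) v* A - snd (v r) *\<^sub>R c) \<bullet> x \<le> fst (v r) \<bullet> b - snd (v r) * \<gamma>2"
    proof
      fix r assume rR: "r \<in> R"
      show "(fst (v r) v* A - snd (v r) *\<^sub>R c) \<bullet> x \<le> fst (v r) \<bullet> b - snd (v r) * \<gamma>2"
      proof (cases "r \<in> Rpos")
        case True
        have tp: "0 < snd (v r)" using True unfolding Rpos_def by auto
        have "\<gamma>2 \<le> (fst (v r) \<bullet> b - d r \<bullet> x) / snd (v r)" unfolding \<gamma>2_def using finRpos True by simp
        then have "snd (v r) * \<gamma>2 \<le> fst (v r) \<bullet> b - d r \<bullet> x" using tp by (simp add: le_divide_eq mult.commute)
        then show ?thesis unfolding d_def by simp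
      next
        case False
        then have "snd (v r) = 0" using t0[OF rR] rR unfolding Rpos_def by auto
        then show ?thesis using dual[OF rR xyP] by simp
      qed
    qed
    obtain y2 where "(x,y2) \<in> polyP A G b" "\<gamma>2 \<le> c \<bullet> x + h \<bullet> y2" using KL[OF all_rays hypKL] by blast
    moreover have "(x,y2) \<in> MI" using calculation(1) xint unfolding MI_def P_def by simp
    ultimately show False using validMI g2 by fastforce
  qed
  have validI: "valid_ineq c h \<gamma>hat (integer_hull P)"
  proof -
    have "convex hull MI \<subseteq> {z. inner (c,h) z \<le> \<gamma>hat}"
      by (rule hull_minimal) (auto simp: convex_halfspace_le main)
    then show ?thesis unfolding valid_ineq_def integer_hull_def MI_def[symmetric] by auto
  qed
  have res: "Rpos \<noteq> {} \<and> valid_ineq c h \<gamma>hat (integer_hull (polyP A G b)) \<and> \<not> valid_ineq c h \<gamma>hat (polyP A G b)"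
    using Rne validI notP unfolding P_def by blast
  show ?thesis unfolding Let_def using res unfolding \<gamma>hat_def \<gamma>_def Rpos_def \<delta>_def .
qed

end
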